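(* Let $f(x)=x^5+px^4+qx^3+rx^2+sx+t$ with real coefficients and let $D$, $L_1$, $L_2$, $D_2$ be as in the context. Suppose $D=0$, $L_1=0$ and $L_2\neq 0$. Then: (a) if $D_2>0$, $f$ has two distinct real double roots and one real simple root; (b) if $D_2<0$, $f$ has a pair of non-real complex conjugate double roots and one real simple root; (c) if $D_2=0$, $f$ has one triple root and two simple roots; in this case, if $L_2>0$ the triple root and both simple roots are real, and if $L_2<0$ the triple root is real and the two simple roots are non-real complex conjugates.
   Context: Let $\alpha_1,\dots,\alpha_5\in\mathbb{C}$ be the roots of $f$ listed with multiplicity. $D=\prod_{1\le i<j\le 5}(\alpha_i-\alpha_j)^2$ is the discriminant of $f$. $L_2=40qs-16p^2s-8rp^3+38rpq+3p^2q^2-12q^3-45r^2$. $L_1=-264ps^2r-12p^3tq^2+36r^3pq-124srpq^2+28srp^3q+260sptq-132p^2qrt+240pr^2t+234sqr^2+32p^4tr+48ptq^3-56sp^3t-80q^2rt+194qs^2p^2-600str-6q^3sp^2+2p^2q^2r^2-12sr^2p^2-54r^4+320s^3-8q^3r^2-8r^3p^3+250qt^2-176q^2s^2+24q^4s-36p^4s^2-100p^2t^2$. $D_2=24p^2q^4s-1100q^3rt+800p^3qst-1735p^2q^2rt-3p^2qr^2s+20pq^3rs-600p^2rst-1150pq^2st+5475pqr^2t-1380pqrs^2+1500qrst+6p^3qr^3+p^4q^2r^2-128p^6rt+660pq^4t-136p^5st-3p^4q^3s-236p^4qs^2+337p^2q^2s^2+48p^5q^2t-357p^3q^3t-12p^4r^2s-45pr^3s+60q^2r^2s-8p^2q^3r^2-500p^2qt^2-24pq^2r^3-1380p^3r^2t+408p^3rs^2-4p^5qrs+1028p^4qrt+11p^3q^2rs+36p^6s^2+100p^4t^2+9p^2r^4-48q^5s+16q^4r^2+160q^3s^2+625q^2t^2-3375r^3t+900r^2s^2$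 (a positive multiple of the discriminant of the degree-2 remainder in the Sturm sequence of $f$). *)

theory Defs
  imports "HOL-Computational_Algebra.Polynomial" Complex_Main
begin

definition quintic :: "real \<Rightarrow> real \<Rightarrow> real \<Rightarrow> real \<Rightarrow> real \<Rightarrow> real poly" where
  "quintic p q r s t = [:t, s, r, q, p, 1:]"

definition quinticC :: "real \<Rightarrow> real \<Rightarrow> real \<Rightarrow> real \<Rightarrow> real \<Rightarrow> complex poly" where
  "quinticC p q r s t = map_poly complex_of_real (quintic p q r s t)"

definition quintic_disc :: "real \<Rightarrow> real \<Rightarrow> real \<Rightarrow> real \<Rightarrow> real \<Rightarrow> complex" where
  "quintic_disc p q r s t =
     (let \<alpha> = (SOME \<alpha> :: nat \<Rightarrow> complex.
                 quinticC p q r s t = (\<Prod>i<5. [:- \<alpha> i, 1:]))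
      in \<Prod>i<5. \<Prod>j\<in>{i<..<5}. (\<alpha> i - \<alpha> j)^2)"

definition L2 :: "real \<Rightarrow> real \<Rightarrow> real \<Rightarrow> real \<Rightarrow> real \<Rightarrow> real" where
  "L2 p q r s t = 40*q*s-16*p^2*s-8*r*p^3+38*r*p*q+3*p^2*q^2-12*q^3-45*r^2"

definition L1 :: "real \<Rightarrow> real \<Rightarrow> real \<Rightarrow> real \<Rightarrow> real \<Rightarrow> real" where
  "L1 p q r s t = -264*p*s^2*r-12*p^3*t*q^2+36*r^3*p*q-124*s*r*p*q^2+28*s*r*p^3*q+260*s*p*t*q
    -132*p^2*q*r*t+240*p*r^2*t+234*s*q*r^2+32*p^4*t*r+48*p*t*q^3-56*s*p^3*t-80*q^2*r*t
    +194*q*s^2*p^2-600*s*t*r-6*q^3*s*p^2+2*p^2*q^2*r^2-12*s*r^2*p^2-54*r^4+320*s^3-8*q^3*r^2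
    -8*r^3*p^3+250*q*t^2-176*q^2*s^2+24*q^4*s-36*p^4*s^2-100*p^2*t^2"

definition D2 :: "real \<Rightarrow> real \<Rightarrow> real \<Rightarrow> real \<Rightarrow> real \<Rightarrow> real" where
  "D2 p q r s t = 24*p^2*q^4*s-1100*q^3*r*t+800*p^3*q*s*t-1735*p^2*q^2*r*t-3*p^2*q*r^2*s
    +20*p*q^3*r*s-600*p^2*r*s*t-1150*p*q^2*s*t+5475*p*q*r^2*t-1380*p*q*r*s^2+1500*q*r*s*t
    +6*p^3*q*r^3+p^4*q^2*r^2-128*p^6*r*t+660*p*q^4*t-136*p^5*s*t-3*p^4*q^3*s-236*p^4*q*s^2
    +337*p^2*q^2*s^2+48*p^5*q^2*t-357*p^3*q^3*t-12*p^4*r^2*s-45*p*r^3*s+60*q^2*r^2*s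
    -8*p^2*q^3*r^2-500*p^2*q*t^2-24*p*q^2*r^3-1380*p^3*r^2*t+408*p^3*r*s^2-4*p^5*q*r*s
    +1028*p^4*q*r*t+11*p^3*q^2*r*s+36*p^6*s^2+100*p^4*t^2+9*p^2*r^4-48*q^5*s+16*q^4*r^2
    +160*q^3*s^2+625*q^2*t^2-3375*r^3*t+900*r^2*s^2"

end

theory Submission imports Defs "HOL-Computational_Algebra.Fundamental_Theorem_Algebra" begin
definition L1c :: "complex \<Rightarrow> complex \<Rightarrow> complex \<Rightarrow> complex \<Rightarrow> complex \<Rightarrow> complex" where
  "L1c p q r s t = -264*p*s^2*r-12*p^3*t*q^2+36*r^3*p*q-124*s*r*p*q^2+28*s*r*p^3*q+260*s*p*t*q
    -132*p^2*q*r*t+240*p*r^2*t+234*s*q*r^2+32*p^4*t*r+48*p*t*q^3-56*s*p^3*t-80*q^2*r*t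
    +194*q*s^2*p^2-600*s*t*r-6*q^3*s*p^2+2*p^2*q^2*r^2-12*s*r^2*p^2-54*r^4+320*s^3-8*q^3*r^2
    -8*r^3*p^3+250*q*t^2-176*q^2*s^2+24*q^4*s-36*p^4*s^2-100*p^2*t^2"

lemma L1c_of_real: "complex_of_real (L1 p q r s t) = L1c (of_real p) (of_real q) (of_real r) (of_real s) (of_real t)"
  by (simp add: L1_def L1c_def)

definition L2c :: "complex \<Rightarrow> complex \<Rightarrow> complex \<Rightarrow> complex \<Rightarrow> complex \<Rightarrow> complex" where
  "L2c p q r s t = 40*q*s-16*p^2*s-8*r*p^3+38*r*p*q+3*p^2*q^2-12*q^3-45*r^2"

lemma L2c_of_real: "complex_of_real (L2 p q r s t) = L2c (of_real p) (of_real q) (of_real r) (of_real s) (of_real t)"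
  by (simp add: L2_def L2c_def)

definition D2c :: "complex \<Rightarrow> complex \<Rightarrow> complex \<Rightarrow> complex \<Rightarrow> complex \<Rightarrow> complex" where
  "D2c p q r s t = 24*p^2*q^4*s-1100*q^3*r*t+800*p^3*q*s*t-1735*p^2*q^2*r*t-3*p^2*q*r^2*s
    +20*p*q^3*r*s-600*p^2*r*s*t-1150*p*q^2*s*t+5475*p*q*r^2*t-1380*p*q*r*s^2+1500*q*r*s*t
    +6*p^3*q*r^3+p^4*q^2*r^2-128*p^6*r*t+660*p*q^4*t-136*p^5*s*t-3*p^4*q^3*s-236*p^4*q*s^2
    +337*p^2*q^2*s^2+48*p^5*q^2*t-357*p^3*q^3*t-12*p^4*r^2*s-45*p*r^3*s+60*q^2*r^2*s
    -8*p^2*q^3*r^2-500*p^2*q*t^2-24*p*q^2*r^3-1380*p^3*r^2*t+408*p^3*r*s^2-4*p^5*q*r*s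
    +1028*p^4*q*r*t+11*p^3*q^2*r*s+36*p^6*s^2+100*p^4*t^2+9*p^2*r^4-48*q^5*s+16*q^4*r^2
    +160*q^3*s^2+625*q^2*t^2-3375*r^3*t+900*r^2*s^2"

lemma D2c_of_real: "complex_of_real (D2 p q r s t) = D2c (of_real p) (of_real q) (of_real r) (of_real s) (of_real t)"
  by (simp add: D2_def D2c_def)
definition E1 :: "complex \<Rightarrow> complex \<Rightarrow> complex \<Rightarrow> complex \<Rightarrow> complex \<Rightarrow> complex" where
  "E1 a b c d e = a+b+c+d+e"
definition E2 :: "complex \<Rightarrow> complex \<Rightarrow> complex \<Rightarrow> complex \<Rightarrow> complex \<Rightarrow> complex" where
  "E2 a b c d e = a*b+a*c+a*d+a*e+b*c+b*d+b*e+c*d+c*e+d*e"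
definition E3 :: "complex \<Rightarrow> complex \<Rightarrow> complex \<Rightarrow> complex \<Rightarrow> complex \<Rightarrow> complex" where
  "E3 a b c d e = a*b*c+a*b*d+a*b*e+a*c*d+a*c*e+a*d*e+b*c*d+b*c*e+b*d*e+c*d*e"
definition E4 :: "complex \<Rightarrow> complex \<Rightarrow> complex \<Rightarrow> complex \<Rightarrow> complex \<Rightarrow> complex" where
  "E4 a b c d e = a*b*c*d+a*b*c*e+a*b*d*e+a*c*d*e+b*c*d*e"
definition E5 :: "complex \<Rightarrow> complex \<Rightarrow> complex \<Rightarrow> complex \<Rightarrow> complex \<Rightarrow> complex" where
  "E5 a b c d e = a*b*c*d*e"

lemma m1: "[:x0,x1:] * [:-c,1::'a::comm_ring_1:] = [:-(c*x0), x0 - c*x1, x1:]"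
  by simp
lemma m2: "[:x0,x1,x2:] * [:-c,1::'a::comm_ring_1:] = [:-(c*x0), x0 - c*x1, x1-c*x2, x2:]"
  by simp
lemma m3: "[:x0,x1,x2,x3:] * [:-c,1::'a::comm_ring_1:] = [:-(c*x0), x0 - c*x1, x1-c*x2, x2 - c*x3, x3:]"
  by simp
lemma m4: "[:x0,x1,x2,x3,x4:] * [:-c,1::'a::comm_ring_1:] = [:-(c*x0), x0 - c*x1, x1-c*x2, x2 - c*x3, x3 - c*x4, x4:]"
  by simp

lemma quinticC_eq: "quinticC p q r s t = [:of_real t, of_real s, of_real r, of_real q, of_real p, 1:]"
  by (simp add: quinticC_def quintic_def map_poly_pCons)

lemma coeffs5:
  assumes h: "quinticC p q r s t = [:-a,1:]*[:-b,1:]*[:-c,1:]*[:-d,1:]*[:-e,1:]"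
  shows "complex_of_real p = - E1 a b c d e" "complex_of_real q = E2 a b c d e"
    "complex_of_real r = - E3 a b c d e" "complex_of_real s = E4 a b c d e"
    "complex_of_real t = - E5 a b c d e"
proof -
  have "[:of_real t, of_real s, of_real r, of_real q, of_real p, 1:] =
     [:-a,1:]*[:-b,1:]*[:-c,1:]*[:-d,1:]*[:-e,1:]" using h by (simp add: quinticC_eq)
  also have "\<dots> = [:- E5 a b c d e, E4 a b c d e, - E3 a b c d e, E2 a b c d e, - E1 a b c d e, 1:]"
    unfolding m1 m2 m3 m4 by (simp add: E1_def E2_def E3_def E4_def E5_def algebra_simps)
  finally show "complex_of_real p = - E1 a b c d e" "complex_of_real q = E2 a b c d e"
    "complex_of_real r = - E3 a b c d e" "complex_of_real s = E4 a b c d e"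
    "complex_of_real t = - E5 a b c d e" by simp_all
qed

lemma F_gen: "z^5 + (- E1 a b c d e)*z^4 + E2 a b c d e*z^3 + (- E3 a b c d e)*z^2 + E4 a b c d e*z + (- E5 a b c d e)
   = (z-a)*(z-b)*(z-c)*(z-d)*(z-e)"
  unfolding E1_def E2_def E3_def E4_def E5_def by algebra

lemma G_gen: "5*z^4 + 4*(- E1 a b c d e)*z^3 + 3*E2 a b c d e*z^2 + 2*(- E3 a b c d e)*z + E4 a b c d e
   = (z-b)*(z-c)*(z-d)*(z-e) + (z-a)*(z-c)*(z-d)*(z-e) + (z-a)*(z-b)*(z-d)*(z-e)
     + (z-a)*(z-b)*(z-c)*(z-e) + (z-a)*(z-b)*(z-c)*(z-d)"
  unfolding E1_def E2_def E3_def E4_def E5_def by algebra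
lemma L1_id: "L1c (- E1 u u v w x) (E2 u u v w x) (- E3 u u v w x) (E4 u u v w x) (- E5 u u v w x)
  = 2*((u-v)*(u-w)*(u-x)*(v-w)*(v-x)*(w-x))^2"
  unfolding L1c_def E1_def E2_def E3_def E4_def E5_def by algebra
lemma L2_221: "L2c (- E1 a a b b c) (E2 a a b b c) (- E3 a a b b c) (E4 a a b b c) (- E5 a a b b c)
  = 4*((a-b)*(a-c)*(b-c))^2"
  unfolding L2c_def E1_def E2_def E3_def E4_def E5_def by algebra
lemma D2_221: "D2c (- E1 a a b b c) (E2 a a b b c) (- E3 a a b b c) (E4 a a b b c) (- E5 a a b b c)
  = 4*(a-b)^6*((a-c)*(b-c))^4"
  unfolding D2c_def E1_def E2_def E3_def E4_def E5_def by algebra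
lemma L2_311: "L2c (- E1 a a a b c) (E2 a a a b c) (- E3 a a a b c) (E4 a a a b c) (- E5 a a a b c)
  = 3*((a-b)*(a-c)*(b-c))^2"
  unfolding L2c_def E1_def E2_def E3_def E4_def E5_def by algebra
lemma D2_311: "D2c (- E1 a a a b c) (E2 a a a b c) (- E3 a a a b c) (E4 a a a b c) (- E5 a a a b c)
  = 0"
  unfolding D2c_def E1_def E2_def E3_def E4_def E5_def by algebra
lemma real_of_cnj: "cnj z = z \<Longrightarrow> complex_of_real (Re z) = z"
  using Reals_cnj_iff of_real_Re by blast

lemma pat221:
  assumes h: "quinticC p q r s t = [:-a,1:]*[:-a,1:]*[:-b,1:]*[:-b,1:]*[:-c,1:]"
    and hL2: "L2 p q r s t \<noteq> 0"
  shows "(\<exists>A B C::real. A \<noteq> B \<and> A \<noteq> C \<and> B \<noteq> C \<and>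
            quinticC p q r s t = [:-complex_of_real A,1:]^2*[:-complex_of_real B,1:]^2*[:-complex_of_real C,1:]
            \<and> D2 p q r s t > 0)
       \<or> (\<exists>z (C::real). Im z \<noteq> 0 \<and> quinticC p q r s t = [:-z,1:]^2*[:-cnj z,1:]^2*[:-complex_of_real C,1:]
            \<and> D2 p q r s t < 0)"
proof -
  note cf = coeffs5[OF h]
  have L2e: "complex_of_real (L2 p q r s t) = 4*((a-b)*(a-c)*(b-c))^2"
    unfolding L2c_of_real cf L2_221 ..
  have D2e: "complex_of_real (D2 p q r s t) = 4*(a-b)^6*((a-c)*(b-c))^4"
    unfolding D2c_of_real cf D2_221 ..
  from hL2 L2e have "(a-b)*(a-c)*(b-c) \<noteq> 0" by (metis mult_zero_right of_real_eq_0_iff power_zero_numeral)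
  then have ab: "a \<noteq> b" and ac: "a \<noteq> c" and bc: "b \<noteq> c" by auto
  define P Q R S T where "P = complex_of_real p" and "Q = complex_of_real q" and "R = complex_of_real r"
    and "S = complex_of_real s" and "T = complex_of_real t"
  define F where "F z = z^5 + P*z^4 + Q*z^3 + R*z^2 + S*z + T" for z
  define G where "G z = 5*z^4 + 4*P*z^3 + 3*Q*z^2 + 2*R*z + S" for z
  have Fc: "F (cnj z) = cnj (F z)" for z by (simp add: F_def P_def Q_def R_def S_def T_def)
  have Gc: "G (cnj z) = cnj (G z)" for z by (simp add: G_def P_def Q_def R_def S_def)
  have Fz: "F z = (z-a)*(z-a)*(z-b)*(z-b)*(z-c)" for z
    unfolding F_def P_def Q_def R_def S_def T_def cf by (rule F_gen)
  have Gz: "G z = (z-a)*(z-b)*(z-b)*(z-c) + (z-a)*(z-b)*(z-b)*(z-c) + (z-a)*(z-a)*(z-b)*(z-c)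
     + (z-a)*(z-a)*(z-b)*(z-c) + (z-a)*(z-a)*(z-b)*(z-b)" for z
    unfolding G_def P_def Q_def R_def S_def cf by (rule G_gen)
  have Ga: "G a = 0" and Gb: "G b = 0" using Gz by simp_all
  have Gcc: "G c \<noteq> 0" using Gz[of c] ab ac bc by simp
  have roots: "z = a \<or> z = b \<or> z = c" if "F z = 0" for z using that Fz by simp
  have Fa: "F a = 0" and Fb: "F b = 0" and Fcc: "F c = 0" using Fz by simp_all
  have cc: "cnj c = c"
  proof -
    have "F (cnj c) = 0" using Fc Fcc by simp
    then have "cnj c = a \<or> cnj c = b \<or> cnj c = c" using roots by blast
    moreover have "cnj c \<noteq> a"
    proof
      assume "cnj c = a" then have "cnj a = c" by auto
      then have "G c = cnj (G a)" using Gc by metis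
      with Ga Gcc show False by simp
    qed
    moreover have "cnj c \<noteq> b"
    proof
      assume "cnj c = b" then have "cnj b = c" by auto
      then have "G c = cnj (G b)" using Gc by metis
      with Gb Gcc show False by simp
    qed
    ultimately show ?thesis by blast
  qed
  have "F (cnj a) = 0" using Fc Fa by simp
  then have "cnj a = a \<or> cnj a = b \<or> cnj a = c" using roots by blast
  moreover have "cnj a \<noteq> c" using cc ac by (metis complex_cnj_cnj)
  ultimately consider (re) "cnj a = a" | (cx) "cnj a = b" by blast
  then show ?thesis
  proof cases
    case re
    have "F (cnj b) = 0" using Fc Fb by simp
    then have "cnj b = a \<or> cnj b = b \<or> cnj b = c" using roots by blast
    moreover have "cnj b \<noteq> a" using re ab by (metis complex_cnj_cnj)
    moreover have "cnj b \<noteq> c" using cc bc by (metis complex_cnj_cnj)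
    ultimately have rb: "cnj b = b" by blast
    define A B C where "A = Re a" and "B = Re b" and "C = Re c"
    have ea: "a = complex_of_real A" and eb: "b = complex_of_real B" and ec: "c = complex_of_real C"
      using real_of_cnj re rb cc A_def B_def C_def by auto
    have "complex_of_real (D2 p q r s t) = complex_of_real (4*(A-B)^6*((A-C)*(B-C))^4)"
      using D2e ea eb ec by simp
    then have D2r: "D2 p q r s t = 4*(A-B)^6*((A-C)*(B-C))^4" using of_real_eq_iff by blast
    have "A \<noteq> B" "A \<noteq> C" "B \<noteq> C" using ab ac bc ea eb ec by auto
    then have "D2 p q r s t > 0" unfolding D2r by (simp add: zero_less_power_eq)
    moreover have "quinticC p q r s t = [:-complex_of_real A,1:]^2*[:-complex_of_real B,1:]^2*[:-complex_of_real C,1:]"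
      unfolding h ea eb ec power2_eq_square by (simp only: mult.assoc)
    ultimately show ?thesis using \<open>A \<noteq> B\<close> \<open>A \<noteq> C\<close> \<open>B \<noteq> C\<close> by blast
  next
    case cx
    have ima: "Im a \<noteq> 0"
    proof
      assume "Im a = 0" then have "cnj a = a" by (simp add: complex_eq_iff)
      with cx ab show False by simp
    qed
    define C where "C = Re c"
    have ec: "c = complex_of_real C" using real_of_cnj cc C_def by auto
    have e1: "a - b = complex_of_real (2 * Im a) * \<i>" using cx complex_diff_cnj by metis
    have e2: "(a-c)*(b-c) = complex_of_real ((Re (a-c))^2 + (Im (a-c))^2)"
      using complex_mult_cnj[of "a-c"] cx cc by simp
    define N where "N = (Re (a-c))^2 + (Im (a-c))^2"
    have "complex_of_real (D2 p q r s t) = 4*(complex_of_real (2 * Im a) * \<i>)^6*(complex_of_real N)^4"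
      using D2e e1 e2 N_def by simp
    also have "\<dots> = complex_of_real (- 256 * (Im a)^6 * N^4)"
      by (simp add: power_mult_distrib)
    finally have D2r: "D2 p q r s t = - 256 * (Im a)^6 * N^4" using of_real_eq_iff by blast
    have "N > 0" unfolding N_def using ac
      by (metis add_nonneg_pos complex_eq_iff sum_power2_gt_zero_iff zero_complex.sel(1) zero_complex.sel(2) right_minus_eq)
    then have "D2 p q r s t < 0" unfolding D2r using ima by (simp add: zero_less_power_eq)
    moreover have "quinticC p q r s t = [:-a,1:]^2*[:-cnj a,1:]^2*[:-complex_of_real C,1:]"
      unfolding h cx ec power2_eq_square by (simp only: mult.assoc)
    ultimately show ?thesis using ima by blast
  qed
qed
lemma pat311:
  assumes h: "quinticC p q r s t = [:-a,1:]*[:-a,1:]*[:-a,1:]*[:-b,1:]*[:-c,1:]"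
    and hL2: "L2 p q r s t \<noteq> 0"
  shows "D2 p q r s t = 0 \<and> a \<noteq> b \<and> a \<noteq> c \<and> b \<noteq> c \<and>
     (L2 p q r s t > 0 \<longrightarrow> a \<in> \<real> \<and> b \<in> \<real> \<and> c \<in> \<real>) \<and>
     (L2 p q r s t < 0 \<longrightarrow> a \<in> \<real> \<and> Im b \<noteq> 0 \<and> c = cnj b)"
proof -
  note cf = coeffs5[OF h]
  have L2e: "complex_of_real (L2 p q r s t) = 3*((a-b)*(a-c)*(b-c))^2"
    unfolding L2c_of_real cf L2_311 ..
  have "complex_of_real (D2 p q r s t) = 0"
    unfolding D2c_of_real cf D2_311 ..
  then have D20: "D2 p q r s t = 0" by simp
  from hL2 L2e have "(a-b)*(a-c)*(b-c) \<noteq> 0" by (metis mult_zero_right of_real_eq_0_iff power_zero_numeral)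
  then have ab: "a \<noteq> b" and ac: "a \<noteq> c" and bc: "b \<noteq> c" by auto
  define P Q R S T where "P = complex_of_real p" and "Q = complex_of_real q" and "R = complex_of_real r"
    and "S = complex_of_real s" and "T = complex_of_real t"
  define F where "F z = z^5 + P*z^4 + Q*z^3 + R*z^2 + S*z + T" for z
  define G where "G z = 5*z^4 + 4*P*z^3 + 3*Q*z^2 + 2*R*z + S" for z
  have Fc: "F (cnj z) = cnj (F z)" for z by (simp add: F_def P_def Q_def R_def S_def T_def)
  have Gc: "G (cnj z) = cnj (G z)" for z by (simp add: G_def P_def Q_def R_def S_def)
  have Fz: "F z = (z-a)*(z-a)*(z-a)*(z-b)*(z-c)" for z
    unfolding F_def P_def Q_def R_def S_def T_def cf by (rule F_gen)
  have Gz: "G z = (z-a)*(z-a)*(z-b)*(z-c) + (z-a)*(z-a)*(z-b)*(z-c) + (z-a)*(z-a)*(z-b)*(z-c)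
     + (z-a)*(z-a)*(z-a)*(z-c) + (z-a)*(z-a)*(z-a)*(z-b)" for z
    unfolding G_def P_def Q_def R_def S_def cf by (rule G_gen)
  have Ga: "G a = 0" using Gz by simp
  have Gb: "G b \<noteq> 0" using Gz[of b] ab ac bc by simp
  have Gcc: "G c \<noteq> 0" using Gz[of c] ab ac bc by simp
  have roots: "z = a \<or> z = b \<or> z = c" if "F z = 0" for z using that Fz by simp
  have Fa: "F a = 0" and Fb: "F b = 0" and Fcc: "F c = 0" using Fz by simp_all
  have ra: "cnj a = a"
  proof -
    have "F (cnj a) = 0" using Fc Fa by simp
    then have "cnj a = a \<or> cnj a = b \<or> cnj a = c" using roots by blast
    moreover have "cnj a \<noteq> b"
    proof
      assume "cnj a = b"
      then have "G b = cnj (G a)" using Gc by metis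
      with Ga Gb show False by simp
    qed
    moreover have "cnj a \<noteq> c"
    proof
      assume "cnj a = c"
      then have "G c = cnj (G a)" using Gc by metis
      with Ga Gcc show False by simp
    qed
    ultimately show ?thesis by blast
  qed
  have "F (cnj b) = 0" using Fc Fb by simp
  then have "cnj b = a \<or> cnj b = b \<or> cnj b = c" using roots by blast
  moreover have "cnj b \<noteq> a" using ra ab by (metis complex_cnj_cnj)
  ultimately consider (re) "cnj b = b" | (cx) "cnj b = c" by blast
  then have main: "(a \<in> \<real> \<and> b \<in> \<real> \<and> c \<in> \<real> \<and> L2 p q r s t > 0) \<or>
     (a \<in> \<real> \<and> Im b \<noteq> 0 \<and> c = cnj b \<and> L2 p q r s t < 0)"
  proof cases
    case re
    have "F (cnj c) = 0" using Fc Fcc by simp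
    then have "cnj c = a \<or> cnj c = b \<or> cnj c = c" using roots by blast
    moreover have "cnj c \<noteq> a" using ra ac by (metis complex_cnj_cnj)
    moreover have "cnj c \<noteq> b" using re bc by (metis complex_cnj_cnj)
    ultimately have rc: "cnj c = c" by blast
    define A B C where "A = Re a" and "B = Re b" and "C = Re c"
    have ea: "a = complex_of_real A" and eb: "b = complex_of_real B" and ec: "c = complex_of_real C"
      using real_of_cnj ra re rc A_def B_def C_def by auto
    have "complex_of_real (L2 p q r s t) = complex_of_real (3*((A-B)*(A-C)*(B-C))^2)"
      using L2e ea eb ec by simp
    then have L2r: "L2 p q r s t = 3*((A-B)*(A-C)*(B-C))^2" using of_real_eq_iff by blast
    have "A \<noteq> B" "A \<noteq> C" "B \<noteq> C" using ab ac bc ea eb ec by auto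
    then have "L2 p q r s t > 0" unfolding L2r by (simp add: zero_less_power_eq)
    then show ?thesis using ra re rc Reals_cnj_iff by blast
  next
    case cx
    have imb: "Im b \<noteq> 0"
    proof
      assume "Im b = 0" then have "cnj b = b" by (simp add: complex_eq_iff)
      with cx bc show False by simp
    qed
    have e1: "b - c = complex_of_real (2 * Im b) * \<i>" using cx complex_diff_cnj by metis
    have e2: "(a-b)*(a-c) = complex_of_real ((Re (a-b))^2 + (Im (a-b))^2)"
      using complex_mult_cnj[of "a-b"] cx ra by simp
    define N where "N = (Re (a-b))^2 + (Im (a-b))^2"
    have "complex_of_real (L2 p q r s t) = 3*(complex_of_real N * (complex_of_real (2 * Im b) * \<i>))^2"
      using L2e e1 e2 N_def by (simp add: mult.assoc)
    also have "\<dots> = complex_of_real (- 12 * N^2 * (Im b)^2)"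
      by (simp add: power_mult_distrib)
    finally have L2r: "L2 p q r s t = - 12 * N^2 * (Im b)^2" using of_real_eq_iff by blast
    have "N > 0" unfolding N_def using ab
      by (metis add_nonneg_pos complex_eq_iff sum_power2_gt_zero_iff zero_complex.sel(1) zero_complex.sel(2) right_minus_eq)
    then have "L2 p q r s t < 0" unfolding L2r using imb by (simp add: zero_less_power_eq)
    then show ?thesis using ra imb cx Reals_cnj_iff by auto
  qed
  show ?thesis using main D20 ab ac bc by auto
qed
lemma fin311:
  assumes h: "quinticC p q r s t = [:-a,1:]*[:-a,1:]*[:-a,1:]*[:-b,1:]*[:-c,1:]"
    and hL2: "L2 p q r s t \<noteq> 0"
  shows "(D2 p q r s t > 0 \<longrightarrow>
        (\<exists>a b c :: real. a \<noteq> b \<and> a \<noteq> c \<and> b \<noteq> c \<and>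
           quinticC p q r s t =
             [:- complex_of_real a, 1:]^2 * [:- complex_of_real b, 1:]^2 * [:- complex_of_real c, 1:]))
   \<and> (D2 p q r s t < 0 \<longrightarrow>
        (\<exists>(z :: complex) (c :: real). Im z \<noteq> 0 \<and>
           quinticC p q r s t =
             [:- z, 1:]^2 * [:- cnj z, 1:]^2 * [:- complex_of_real c, 1:]))
   \<and> (D2 p q r s t = 0 \<longrightarrow>
        (\<exists>a b c :: complex. a \<noteq> b \<and> a \<noteq> c \<and> b \<noteq> c \<and>
           quinticC p q r s t = [:- a, 1:]^3 * [:- b, 1:] * [:- c, 1:] \<and>
           (L2 p q r s t > 0 \<longrightarrow> a \<in> \<real> \<and> b \<in> \<real> \<and> c \<in> \<real>) \<and>
           (L2 p q r s t < 0 \<longrightarrow> a \<in> \<real> \<and> Im b \<noteq> 0 \<and> c = cnj b)))"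
proof -
  note P = pat311[OF h hL2]
  have "quinticC p q r s t = [:- a, 1:]^3 * [:- b, 1:] * [:- c, 1:]"
    unfolding h power3_eq_cube by (simp only: mult.assoc)
  note poly = this
  have D20: "D2 p q r s t = 0" using P by blast
  show ?thesis
  proof (intro conjI impI)
    assume "D2 p q r s t > 0" with D20 show "\<exists>a b c :: real. a \<noteq> b \<and> a \<noteq> c \<and> b \<noteq> c \<and>
           quinticC p q r s t =
             [:- complex_of_real a, 1:]^2 * [:- complex_of_real b, 1:]^2 * [:- complex_of_real c, 1:]" by simp
  next
    assume "D2 p q r s t < 0" with D20 show "\<exists>(z :: complex) (c :: real). Im z \<noteq> 0 \<and>
           quinticC p q r s t = [:- z, 1:]^2 * [:- cnj z, 1:]^2 * [:- complex_of_real c, 1:]" by simp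
  next
    show "\<exists>a' b' c' :: complex. a' \<noteq> b' \<and> a' \<noteq> c' \<and> b' \<noteq> c' \<and>
           quinticC p q r s t = [:- a', 1:]^3 * [:- b', 1:] * [:- c', 1:] \<and>
           (L2 p q r s t > 0 \<longrightarrow> a' \<in> \<real> \<and> b' \<in> \<real> \<and> c' \<in> \<real>) \<and>
           (L2 p q r s t < 0 \<longrightarrow> a' \<in> \<real> \<and> Im b' \<noteq> 0 \<and> c' = cnj b')"
      by (intro exI[of _ a] exI[of _ b] exI[of _ c]) (use poly P in blast)
  qed
qed

lemma fin221:
  assumes h: "quinticC p q r s t = [:-a,1:]*[:-a,1:]*[:-b,1:]*[:-b,1:]*[:-c,1:]"
    and hL2: "L2 p q r s t \<noteq> 0"
  shows "(D2 p q r s t > 0 \<longrightarrow>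
        (\<exists>a b c :: real. a \<noteq> b \<and> a \<noteq> c \<and> b \<noteq> c \<and>
           quinticC p q r s t =
             [:- complex_of_real a, 1:]^2 * [:- complex_of_real b, 1:]^2 * [:- complex_of_real c, 1:]))
   \<and> (D2 p q r s t < 0 \<longrightarrow>
        (\<exists>(z :: complex) (c :: real). Im z \<noteq> 0 \<and>
           quinticC p q r s t =
             [:- z, 1:]^2 * [:- cnj z, 1:]^2 * [:- complex_of_real c, 1:]))
   \<and> (D2 p q r s t = 0 \<longrightarrow>
        (\<exists>a b c :: complex. a \<noteq> b \<and> a \<noteq> c \<and> b \<noteq> c \<and>
           quinticC p q r s t = [:- a, 1:]^3 * [:- b, 1:] * [:- c, 1:] \<and>
           (L2 p q r s t > 0 \<longrightarrow> a \<in> \<real> \<and> b \<in> \<real> \<and> c \<in> \<real>) \<and>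
           (L2 p q r s t < 0 \<longrightarrow> a \<in> \<real> \<and> Im b \<noteq> 0 \<and> c = cnj b)))"
proof -
  from pat221[OF h hL2] show ?thesis
  proof (elim disjE exE conjE)
    fix A B C :: real
    assume *: "A \<noteq> B" "A \<noteq> C" "B \<noteq> C"
      "quinticC p q r s t = [:-complex_of_real A,1:]^2*[:-complex_of_real B,1:]^2*[:-complex_of_real C,1:]"
      and d: "D2 p q r s t > 0"
    have "\<exists>a b c :: real. a \<noteq> b \<and> a \<noteq> c \<and> b \<noteq> c \<and>
           quinticC p q r s t =
             [:- complex_of_real a, 1:]^2 * [:- complex_of_real b, 1:]^2 * [:- complex_of_real c, 1:]"
      using * by blast
    moreover have "\<not> D2 p q r s t < 0" "D2 p q r s t \<noteq> 0" using d by auto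
    ultimately show ?thesis by blast
  next
    fix z C
    assume *: "Im z \<noteq> 0" "quinticC p q r s t = [:-z,1:]^2*[:-cnj z,1:]^2*[:-complex_of_real C,1:]"
      and d: "D2 p q r s t < 0"
    have "\<exists>(z :: complex) (c :: real). Im z \<noteq> 0 \<and>
           quinticC p q r s t = [:- z, 1:]^2 * [:- cnj z, 1:]^2 * [:- complex_of_real c, 1:]"
      using * by blast
    moreover have "\<not> D2 p q r s t > 0" "D2 p q r s t \<noteq> 0" using d by auto
    ultimately show ?thesis by blast
  qed
qed

lemma prod_5: "(\<Prod>i<(5::nat). f i) = f 0 * f 1 * f 2 * f 3 * (f 4 :: 'a::comm_monoid_mult)"
  by (simp add: eval_nat_numeral lessThan_Suc_atMost atMost_Suc mult_ac)

lemma ex_roots: "\<exists>\<alpha>. quinticC p q r s t = (\<Prod>i<(5::nat). [:- \<alpha> i, 1:])"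
proof -
  obtain root where r: "smult (lead_coeff (quinticC p q r s t)) (\<Prod>i<degree (quinticC p q r s t). [:-root i, 1:]) = quinticC p q r s t"
    using complex_poly_decompose' by blast
  have d: "degree (quinticC p q r s t) = 5" and l: "coeff (quinticC p q r s t) 5 = 1"
    by (simp_all add: quinticC_eq numeral_eq_Suc)
  have "quinticC p q r s t = (\<Prod>i<5. [:-root i, 1:])" using r unfolding d l by simp
  then show ?thesis by blast
qed

lemma pick:
  assumes hq: "Q = [:-\<alpha> 0,1:]*[:-\<alpha> 1,1:]*[:-\<alpha> 2,1:]*[:-\<alpha> 3,1:]*[:-(\<alpha> 4 :: complex),1:]"
    and ij: "i < j" "j < (5::nat)" and e: "\<alpha> i = \<alpha> j"
  shows "\<exists>u v w x. Q = [:-u,1:]*[:-u,1:]*[:-v,1:]*[:-w,1:]*[:-x,1:]"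
proof -
  consider "i = 0" "j = 1" | "i = 0" "j = 2" | "i = 0" "j = 3" | "i = 0" "j = 4" | "i = 1" "j = 2" | "i = 1" "j = 3" | "i = 1" "j = 4" | "i = 2" "j = 3" | "i = 2" "j = 4" | "i = 3" "j = 4" using ij by (auto simp: less_Suc_eq numeral_eq_Suc)
  then show ?thesis
  proof cases
    case 1
    have ee: "\<alpha> 0 = \<alpha> 1" using e 1 by simp
    show ?thesis unfolding hq by (intro exI[of _ "\<alpha> 0"] exI[of _ "\<alpha> 2"] exI[of _ "\<alpha> 3"] exI[of _ "\<alpha> 4"]) (simp only: mult_ac ee)
  next
    case 2
    have ee: "\<alpha> 0 = \<alpha> 2" using e 2 by simp
    show ?thesis unfolding hq by (intro exI[of _ "\<alpha> 0"] exI[of _ "\<alpha> 1"] exI[of _ "\<alpha> 3"] exI[of _ "\<alpha> 4"]) (simp only: mult_ac ee)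
  next
    case 3
    have ee: "\<alpha> 0 = \<alpha> 3" using e 3 by simp
    show ?thesis unfolding hq by (intro exI[of _ "\<alpha> 0"] exI[of _ "\<alpha> 1"] exI[of _ "\<alpha> 2"] exI[of _ "\<alpha> 4"]) (simp only: mult_ac ee)
  next
    case 4
    have ee: "\<alpha> 0 = \<alpha> 4" using e 4 by simp
    show ?thesis unfolding hq by (intro exI[of _ "\<alpha> 0"] exI[of _ "\<alpha> 1"] exI[of _ "\<alpha> 2"] exI[of _ "\<alpha> 3"]) (simp only: mult_ac ee)
  next
    case 5
    have ee: "\<alpha> 1 = \<alpha> 2" using e 5 by simp
    show ?thesis unfolding hq by (intro exI[of _ "\<alpha> 1"] exI[of _ "\<alpha> 0"] exI[of _ "\<alpha> 3"] exI[of _ "\<alpha> 4"]) (simp only: mult_ac ee)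
  next
    case 6
    have ee: "\<alpha> 1 = \<alpha> 3" using e 6 by simp
    show ?thesis unfolding hq by (intro exI[of _ "\<alpha> 1"] exI[of _ "\<alpha> 0"] exI[of _ "\<alpha> 2"] exI[of _ "\<alpha> 4"]) (simp only: mult_ac ee)
  next
    case 7
    have ee: "\<alpha> 1 = \<alpha> 4" using e 7 by simp
    show ?thesis unfolding hq by (intro exI[of _ "\<alpha> 1"] exI[of _ "\<alpha> 0"] exI[of _ "\<alpha> 2"] exI[of _ "\<alpha> 3"]) (simp only: mult_ac ee)
  next
    case 8
    have ee: "\<alpha> 2 = \<alpha> 3" using e 8 by simp
    show ?thesis unfolding hq by (intro exI[of _ "\<alpha> 2"] exI[of _ "\<alpha> 0"] exI[of _ "\<alpha> 1"] exI[of _ "\<alpha> 4"]) (simp only: mult_ac ee)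
  next
    case 9
    have ee: "\<alpha> 2 = \<alpha> 4" using e 9 by simp
    show ?thesis unfolding hq by (intro exI[of _ "\<alpha> 2"] exI[of _ "\<alpha> 0"] exI[of _ "\<alpha> 1"] exI[of _ "\<alpha> 3"]) (simp only: mult_ac ee)
  next
    case 10
    have ee: "\<alpha> 3 = \<alpha> 4" using e 10 by simp
    show ?thesis unfolding hq by (intro exI[of _ "\<alpha> 3"] exI[of _ "\<alpha> 0"] exI[of _ "\<alpha> 1"] exI[of _ "\<alpha> 2"]) (simp only: mult_ac ee)
  qed
qed


theorem mainTheorem3:
  fixes p q r s t :: real
  assumes hD: "quintic_disc p q r s t = 0"
    and hL1: "L1 p q r s t = 0"
    and hL2: "L2 p q r s t \<noteq> 0"
  shows
    "(D2 p q r s t > 0 \<longrightarrow>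
        (\<exists>a b c :: real. a \<noteq> b \<and> a \<noteq> c \<and> b \<noteq> c \<and>
           quinticC p q r s t =
             [:- complex_of_real a, 1:]^2 * [:- complex_of_real b, 1:]^2 * [:- complex_of_real c, 1:]))
   \<and> (D2 p q r s t < 0 \<longrightarrow>
        (\<exists>(z :: complex) (c :: real). Im z \<noteq> 0 \<and>
           quinticC p q r s t =
             [:- z, 1:]^2 * [:- cnj z, 1:]^2 * [:- complex_of_real c, 1:]))
   \<and> (D2 p q r s t = 0 \<longrightarrow>
        (\<exists>a b c :: complex. a \<noteq> b \<and> a \<noteq> c \<and> b \<noteq> c \<and>
           quinticC p q r s t = [:- a, 1:]^3 * [:- b, 1:] * [:- c, 1:] \<and>
           (L2 p q r s t > 0 \<longrightarrow> a \<in> \<real> \<and> b \<in> \<real> \<and> c \<in> \<real>) \<and>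
           (L2 p q r s t < 0 \<longrightarrow> a \<in> \<real> \<and> Im b \<noteq> 0 \<and> c = cnj b)))"
proof -
  define \<alpha> where "\<alpha> = (SOME \<alpha> :: nat \<Rightarrow> complex. quinticC p q r s t = (\<Prod>i<5. [:- \<alpha> i, 1:]))"
  have ha: "quinticC p q r s t = (\<Prod>i<5. [:- \<alpha> i, 1:])"
    unfolding \<alpha>_def by (rule someI_ex[OF ex_roots])
  have "quintic_disc p q r s t = (\<Prod>i<5. \<Prod>j\<in>{i<..<5}. (\<alpha> i - \<alpha> j)^2)"
    unfolding quintic_disc_def Let_def \<alpha>_def ..
  with hD obtain i j where ij: "i < 5" "j \<in> {i<..<5}" "(\<alpha> i - \<alpha> j)^2 = 0"
    by (auto simp: prod_zero_iff)
  then have ij2: "i < j" "j < 5" "\<alpha> i = \<alpha> j" by auto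
  have hq: "quinticC p q r s t = [:-\<alpha> 0,1:]*[:-\<alpha> 1,1:]*[:-\<alpha> 2,1:]*[:-\<alpha> 3,1:]*[:-\<alpha> 4,1:]"
    using ha by (simp add: prod_5)
  obtain u v w x where h: "quinticC p q r s t = [:-u,1:]*[:-u,1:]*[:-v,1:]*[:-w,1:]*[:-x,1:]"
    using pick[OF hq ij2] by blast
  note cf = coeffs5[OF h]
  have "complex_of_real (L1 p q r s t) = 2*((u-v)*(u-w)*(u-x)*(v-w)*(v-x)*(w-x))^2"
    unfolding L1c_of_real cf L1_id ..
  with hL1 have "(u-v)*(u-w)*(u-x)*(v-w)*(v-x)*(w-x) = 0" by simp
  then consider "u = v" | "u = w" | "u = x" | "v = w" | "v = x" | "w = x" by auto
  then show ?thesis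
  proof cases
    case 1
    have "quinticC p q r s t = [:-u,1:]*[:-u,1:]*[:-u,1:]*[:-w,1:]*[:-x,1:]" unfolding h 1 by (simp only: mult_ac)
    then show ?thesis using fin311 hL2 by blast
  next
    case 2
    have "quinticC p q r s t = [:-u,1:]*[:-u,1:]*[:-u,1:]*[:-v,1:]*[:-x,1:]" unfolding h 2 by (simp only: mult_ac)
    then show ?thesis using fin311 hL2 by blast
  next
    case 3
    have "quinticC p q r s t = [:-u,1:]*[:-u,1:]*[:-u,1:]*[:-v,1:]*[:-w,1:]" unfolding h 3 by (simp only: mult_ac)
    then show ?thesis using fin311 hL2 by blast
  next
    case 4
    have "quinticC p q r s t = [:-u,1:]*[:-u,1:]*[:-w,1:]*[:-w,1:]*[:-x,1:]" unfolding h 4 by (simp only: mult_ac)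
    then show ?thesis using fin221 hL2 by blast
  next
    case 5
    have "quinticC p q r s t = [:-u,1:]*[:-u,1:]*[:-x,1:]*[:-x,1:]*[:-w,1:]" unfolding h 5 by (simp only: mult_ac)
    then show ?thesis using fin221 hL2 by blast
  next
    case 6
    have "quinticC p q r s t = [:-u,1:]*[:-u,1:]*[:-x,1:]*[:-x,1:]*[:-v,1:]" unfolding h 6 by (simp only: mult_ac)
    then show ?thesis using fin221 hL2 by blast
  qed
qed
end
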